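(* Let $\mathsf{x}\in\mathbb{R}^m$ be a random vector and let $n\in\mathbb{N}$ with $n\le m$ and $n>K(\mathsf{x})$. Then there exists a Borel measurable mapping $g\colon\mathbb{R}^{n\times m}\times\mathbb{R}^n\to\mathbb{R}^m$ such that $$\mathbb{P}[g(\mathbf{A},\mathbf{A}\mathsf{x})\neq\mathsf{x}]=0\quad\text{for }\lambda^{n\times m}\text{-almost all }\mathbf{A}\in\mathbb{R}^{n\times m}.$$
   Context: For nonempty $\mathcal{U}\subseteq\mathbb{R}^m$ and $\rho>0$, $N_{\mathcal U}(\rho)$ denotes the smallest number of open Euclidean balls of radius $\rho$ covering $\mathcal U$ ($=\infty$ if no finite cover exists). The lower and upper Minkowski dimensions are $\underline{\dim}_{\mathrm B}(\mathcal U)=\liminf_{\rho\to0}\frac{\log N_{\mathcal U}(\rho)}{\log(1/\rho)}$ and $\overline{\dim}_{\mathrm B}(\mathcal U)=\limsup_{\rho\to0}\frac{\log N_{\mathcal U}(\rho)}{\log(1/\rho)}$. The lower modified Minkowski dimension is $\underline{\dim}_{\mathrm{MB}}(\mathcal U)=\inf\{\sup_{i\in\mathbb N}\underline{\dim}_{\mathrm B}(\mathcal U_i):\mathcal U\subseteq\bigcup_{i\in\mathbb N}\mathcal U_i\}$, the infimum taken over all countable covers of $\mathcal U$ by nonempty bounded sets $\mathcal U_i$; the upper modified Minkowski dimension $\overline{\dim}_{\mathrm{MB}}$ is defined the same way with $\overline{\dim}_{\mathrm B}$. A support set of a random vector $\mathsf x\in\mathbb R^m$ is any set $\mathcal U\subseteq\mathbb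 R^m$ with $\mathbb P[\mathsf x\in\mathcal U]=1$. The description complexity of $\mathsf x$ is $K(\mathsf x)=\inf\{\underline{\dim}_{\mathrm{MB}}(\mathcal U):\mathcal U\text{ a support set of }\mathsf x\}$. $\lambda^{n\times m}$ is Lebesgue measure on $\mathbb R^{n\times m}$. *)

theory Defs
  imports "HOL-Probability.Probability"
begin

definition covering_number :: "'a::metric_space set \<Rightarrow> real \<Rightarrow> ereal" where
  "covering_number U \<rho> =
     (if \<exists>C. finite C \<and> U \<subseteq> (\<Union>c\<in>C. ball c \<rho>)
      then ereal (real (LEAST k. \<exists>C. finite C \<and> card C = k \<and> U \<subseteq> (\<Union>c\<in>C. ball c \<rho>)))
      else \<infinity>)"

definition box_ratio :: "'a::metric_space set \<Rightarrow> real \<Rightarrow> ereal" where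
  "box_ratio U \<rho> =
     (if covering_number U \<rho> = \<infinity> then \<infinity>
      else ereal (ln (real_of_ereal (covering_number U \<rho>)) / ln (1 / \<rho>)))"

definition lower_box_dim :: "'a::metric_space set \<Rightarrow> ereal" where
  "lower_box_dim U = Liminf (at_right 0) (box_ratio U)"

definition upper_box_dim :: "'a::metric_space set \<Rightarrow> ereal" where
  "upper_box_dim U = Limsup (at_right 0) (box_ratio U)"

definition lower_mod_box_dim :: "'a::metric_space set \<Rightarrow> ereal" where
  "lower_mod_box_dim U =
     (INF Ui \<in> {Ui :: nat \<Rightarrow> 'a set. (\<forall>i. Ui i \<noteq> {} \<and> bounded (Ui i)) \<and> U \<subseteq> (\<Union>i. Ui i)}.
        (SUP i. lower_box_dim (Ui i)))"

definition upper_mod_box_dim :: "'a::metric_space set \<Rightarrow> ereal" where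
  "upper_mod_box_dim U =
     (INF Ui \<in> {Ui :: nat \<Rightarrow> 'a set. (\<forall>i. Ui i \<noteq> {} \<and> bounded (Ui i)) \<and> U \<subseteq> (\<Union>i. Ui i)}.
        (SUP i. upper_box_dim (Ui i)))"

definition support_set :: "'w measure \<Rightarrow> ('w \<Rightarrow> 'a) \<Rightarrow> 'a set \<Rightarrow> bool" where
  "support_set M X U \<longleftrightarrow>
     {\<omega> \<in> space M. X \<omega> \<in> U} \<in> sets M \<and> measure M {\<omega> \<in> space M. X \<omega> \<in> U} = 1"

definition description_complexity :: "'w measure \<Rightarrow> ('w \<Rightarrow> 'a::metric_space) \<Rightarrow> ereal" where
  "description_complexity M X = (INF U \<in> {U. support_set M X U}. lower_mod_box_dim U)"

end

theory Submission
  imports Defs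
begin

lemma liminf_freq:
  fixes f :: "real \<Rightarrow> ereal"
  assumes "Liminf (at_right 0) f < c" "e > 0"
  shows "\<exists>\<rho>. 0 < \<rho> \<and> \<rho> < e \<and> f \<rho> < c"
proof (rule ccontr)
  assume "\<not> ?thesis"
  hence "\<forall>\<rho>. 0 < \<rho> \<and> \<rho> < e \<longrightarrow> c \<le> f \<rho>" by (metis not_less)
  hence "eventually (\<lambda>\<rho>. c \<le> f \<rho>) (at_right 0)"
    unfolding eventually_at_right_field using assms(2) by blast
  hence "c \<le> Liminf (at_right 0) f" by (rule Liminf_bounded)
  with assms show False by simp
qed

lemma cover_from_ratio:
  fixes W :: "'a::metric_space set"
  assumes "box_ratio W \<rho> < ereal s" "0 < \<rho>" "\<rho> < 1"
  shows "\<exists>C. finite C \<and> W \<subseteq> (\<Union>c\<in>C. ball c \<rho>) \<and> real (card C) \<le> \<rho> powr (-s)"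
proof -
  have ex: "\<exists>C. finite C \<and> W \<subseteq> (\<Union>c\<in>C. ball c \<rho>)"
    using assms(1) by (auto simp: box_ratio_def covering_number_def split: if_splits)
  define N where "N = (LEAST k. \<exists>C. finite C \<and> card C = k \<and> W \<subseteq> (\<Union>c\<in>C. ball c \<rho>))"
  have "\<exists>C. finite C \<and> card C = N \<and> W \<subseteq> (\<Union>c\<in>C. ball c \<rho>)"
    unfolding N_def by (rule LeastI_ex) (use ex in blast)
  then obtain C where C: "finite C" "card C = N" "W \<subseteq> (\<Union>c\<in>C. ball c \<rho>)" by blast
  have cn: "covering_number W \<rho> = ereal (real N)"
    using ex unfolding covering_number_def N_def by simp
  have lnpos: "ln (1/\<rho>) > 0" using assms by simp
  have "ln (real N) / ln (1/\<rho>) < s"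
    using assms(1) by (simp add: box_ratio_def cn)
  hence lt: "ln (real N) < s * ln (1/\<rho>)" using lnpos by (simp add: divide_less_eq)
  have "real N \<le> \<rho> powr (-s)"
  proof (cases "N = 0")
    case True then show ?thesis by simp
  next
    case False
    hence "real N = exp (ln (real N))" by simp
    also have "\<dots> \<le> exp (s * ln (1/\<rho>))" using lt by simp
    also have "\<dots> = \<rho> powr (-s)" using assms(2)
      by (simp add: powr_def ln_div)
    finally show ?thesis .
  qed
  with C show ?thesis by blast
qed

lemma lbd_thin:
  fixes W :: "'a::metric_space set"
  assumes "lower_box_dim W < ereal s" "e > 0"
  shows "\<exists>\<rho> C. 0 < \<rho> \<and> \<rho> < e \<and> finite C \<and> W \<subseteq> (\<Union>c\<in>C. ball c \<rho>) \<and> real (card C) \<le> \<rho> powr (-s)"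
proof -
  obtain \<rho> where r: "0 < \<rho>" "\<rho> < min e 1" "box_ratio W \<rho> < ereal s"
    using liminf_freq[of "box_ratio W" "ereal s" "min e 1"] assms
    by (auto simp: lower_box_dim_def)
  then show ?thesis using cover_from_ratio[OF r(3) r(1)] by force
qed


lemma Basis_vec_image: "(Basis :: ('a::euclidean_space^'n) set) = (\<lambda>(i,c). axis i c) ` (UNIV \<times> Basis)"
  unfolding Basis_vec_def by auto

lemma inj_axis_pairs: "inj_on (\<lambda>(i,c). axis i (c::'a::euclidean_space)) (UNIV \<times> Basis)"
  by (auto simp: inj_on_def axis_eq_axis nonzero_Basis)

lemma prod_Basis_vec:
  "(\<Prod>b\<in>(Basis :: ('a::euclidean_space^'n) set). f b) = (\<Prod>i\<in>UNIV. \<Prod>c\<in>Basis. f (axis i c))"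
  apply (subst Basis_vec_image)
  apply (subst prod.reindex[OF inj_axis_pairs])
  apply (simp add: prod.cartesian_product split_def)
  done

lemma mem_box_vec: "(x::'a::euclidean_space^'n) \<in> box l u \<longleftrightarrow> (\<forall>i. x$i \<in> box (l$i) (u$i))"
  unfolding mem_box Basis_vec_def by (auto simp: inner_axis)

lemma vec_lambda_meas: "(\<lambda>f. vec_lambda f) \<in> (PiM UNIV (\<lambda>_::'n. lborel :: 'a::euclidean_space measure)) \<rightarrow>\<^sub>M (borel :: ('a^'n) measure)"
proof (subst borel_measurable_euclidean_space, intro ballI)
  fix b :: "'a^'n" assume "b \<in> Basis"
  then obtain i c where b: "b = axis i c" "c \<in> Basis" unfolding Basis_vec_def by auto
  have "(\<lambda>f. f i \<bullet> c) \<in> borel_measurable (PiM UNIV (\<lambda>_::'n. lborel :: 'a measure))"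
    by measurable
  then show "(\<lambda>x. vec_lambda x \<bullet> b) \<in> borel_measurable (PiM UNIV (\<lambda>_::'n. lborel :: 'a measure))"
    by (simp add: b inner_axis)
qed

lemma lborel_vec:
  "(lborel :: ('a::euclidean_space ^ 'n) measure) = distr (PiM UNIV (\<lambda>_::'n. lborel :: 'a measure)) borel vec_lambda"
proof (rule lborel_eqI)
  interpret product_sigma_finite "\<lambda>_::'n. lborel :: 'a measure" by standard
  fix l u :: "'a^'n" assume le: "\<And>b. b\<in>Basis \<Longrightarrow> l\<bullet>b \<le> u\<bullet>b"
  have le2: "\<And>i c. c \<in> Basis \<Longrightarrow> l$i \<bullet> c \<le> u$i \<bullet> c"
    using le by (metis axis_in_Basis_iff inner_axis)
  have pre: "vec_lambda -` box l u \<inter> space (PiM UNIV (\<lambda>_::'n. lborel :: 'a measure)) = PiE UNIV (\<lambda>i. box (l$i) (u$i))"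
    by (auto simp: space_PiM mem_box_vec PiE_iff)
  have "emeasure (distr (PiM UNIV (\<lambda>_::'n. lborel :: 'a measure)) borel vec_lambda) (box l u)
      = emeasure (PiM UNIV (\<lambda>_::'n. lborel :: 'a measure)) (PiE UNIV (\<lambda>i. box (l$i) (u$i)))"
    by (subst emeasure_distr[OF vec_lambda_meas]) (simp_all add: pre)
  also have "\<dots> = (\<Prod>i\<in>UNIV. emeasure lborel (box (l$i) (u$i)))"
    by (rule emeasure_PiM) auto
  also have "\<dots> = (\<Prod>i\<in>UNIV. ennreal (\<Prod>c\<in>Basis. (u$i - l$i) \<bullet> c))"
    using le2 by (simp add: emeasure_lborel_box_eq inner_diff_left)
  also have "\<dots> = ennreal (\<Prod>i\<in>UNIV. (\<Prod>c\<in>Basis. (u$i - l$i) \<bullet> c))"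
    by (rule prod_ennreal) (use le2 in \<open>auto intro!: prod_nonneg simp: inner_diff_left\<close>)
  also have "(\<Prod>i\<in>UNIV. (\<Prod>c\<in>Basis. (u$i - l$i) \<bullet> c)) = (\<Prod>b\<in>Basis. (u - l) \<bullet> b)"
    by (simp add: prod_Basis_vec inner_axis)
  finally show "emeasure (distr (PiM UNIV (\<lambda>_::'n. lborel :: 'a measure)) borel vec_lambda) (box l u) = (\<Prod>b\<in>Basis. (u - l) \<bullet> b)" .
qed simp


lemma slab_measure:
  fixes v :: "real^'m" and k :: 'm
  assumes vk: "v$k \<noteq> 0" and R: "R \<ge> 0" and d: "\<delta> \<ge> 0"
  shows "emeasure lborel {a::real^'m. (\<forall>j. \<bar>a$j\<bar> \<le> R) \<and> \<bar>a \<bullet> v\<bar> \<le> \<delta>}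
          \<le> ennreal ((2*R)^(CARD('m)-1) * (2*\<delta>/\<bar>v$k\<bar>))"
proof -
  interpret product_sigma_finite "\<lambda>_::'m. lborel :: real measure" by standard
  define P where "P = (PiM UNIV (\<lambda>_::'m. lborel :: real measure))"
  define S where "S = {a::real^'m. (\<forall>j. \<bar>a$j\<bar> \<le> R) \<and> \<bar>a \<bullet> v\<bar> \<le> \<delta>}"
  define S' where "S' = {f::'m\<Rightarrow>real. (\<forall>j. \<bar>f j\<bar> \<le> R) \<and> \<bar>\<Sum>j\<in>UNIV. f j * v$j\<bar> \<le> \<delta>}"
  define I where "I = UNIV - {k}"
  have UI: "UNIV = insert k I" "finite I" "k \<notin> I" by (auto simp: I_def)
  have S'meas: "S' \<in> sets P"
  proof -
    have "S' = {f \<in> space P. (\<forall>j. \<bar>f j\<bar> \<le> R) \<and> \<bar>\<Sum>j\<in>UNIV. f j * v$j\<bar> \<le> \<delta>}"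
      by (auto simp: S'_def P_def space_PiM)
    also have "\<dots> \<in> sets P" unfolding P_def by measurable
    finally show ?thesis .
  qed
  have Smeas: "S \<in> sets borel"
    unfolding S_def by measurable
  have "emeasure lborel S = emeasure (distr P borel vec_lambda) S"
    by (simp add: P_def lborel_vec[symmetric])
  also have "\<dots> = emeasure P (vec_lambda -` S \<inter> space P)"
    by (rule emeasure_distr) (use vec_lambda_meas Smeas in \<open>auto simp: P_def\<close>)
  also have "vec_lambda -` S \<inter> space P = S'"
    by (auto simp: S_def S'_def P_def space_PiM inner_vec_def)
  also have "emeasure P S' = (\<integral>\<^sup>+ f. indicator S' f \<partial>P)"
    using S'meas by simp
  also have "\<dots> = (\<integral>\<^sup>+ x. (\<integral>\<^sup>+ y. indicator S' (x(k := y)) \<partial>lborel) \<partial>(PiM I (\<lambda>_. lborel)))"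
    unfolding P_def UI(1) by (rule product_nn_integral_insert) (use UI S'meas P_def in auto)
  also have "\<dots> \<le> (\<integral>\<^sup>+ x. ennreal (2*\<delta>/\<bar>v$k\<bar>) * indicator (PiE I (\<lambda>_. {-R..R})) x \<partial>(PiM I (\<lambda>_. lborel)))"
  proof (rule nn_integral_mono)
    fix x assume x: "x \<in> space (PiM I (\<lambda>_. lborel :: real measure))"
    define c where "c = (\<Sum>j\<in>I. x j * v$j)"
    define a where "a = - c / v$k - \<delta>/\<bar>v$k\<bar>"
    define b where "b = - c / v$k + \<delta>/\<bar>v$k\<bar>"
    have sumeq: "(\<Sum>j\<in>UNIV. (x(k:=y)) j * v$j) = y * v$k + c" for y
    proof -
      have "(\<Sum>j\<in>UNIV. (x(k:=y)) j * v$j) = (\<Sum>j\<in>insert k I. (x(k:=y)) j * v$j)"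
        by (simp only: UI(1)[symmetric])
      also have "\<dots> = y * v$k + (\<Sum>j\<in>I. (x(k:=y)) j * v$j)" using UI(2,3) by (simp add: sum.insert)
      also have "(\<Sum>j\<in>I. (x(k:=y)) j * v$j) = c" unfolding c_def using UI(3) by (intro sum.cong) auto
      finally show ?thesis .
    qed
    have ind: "(indicator S' (x(k := y)) :: ennreal) \<le> indicator (PiE I (\<lambda>_. {-R..R})) x * indicator {a..b} y" for y :: real
    proof (cases "x(k := y) \<in> S'")
      case True
      hence xin: "x \<in> PiE I (\<lambda>_. {-R..R})"
        using x by (auto simp: S'_def space_PiM PiE_iff I_def abs_le_iff split: if_splits)
      have "\<bar>\<Sum>j\<in>UNIV. (x(k:=y)) j * v$j\<bar> \<le> \<delta>" using True unfolding S'_def by blast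
      hence "\<bar>y * v$k + c\<bar> \<le> \<delta>" by (simp only: sumeq)
      hence "\<bar>y + c / v$k\<bar> * \<bar>v$k\<bar> \<le> \<delta>" using vk
        by (simp add: abs_mult[symmetric] distrib_right)
      hence "\<bar>y + c / v$k\<bar> \<le> \<delta> / \<bar>v$k\<bar>" using vk by (simp add: pos_le_divide_eq)
      hence "y \<in> {a..b}" by (auto simp: a_def b_def abs_le_iff)
      then show ?thesis using xin True by (auto simp: indicator_def)
    qed simp
    have "(\<integral>\<^sup>+ y. indicator S' (x(k := y)) \<partial>lborel) \<le> (\<integral>\<^sup>+ y. indicator (PiE I (\<lambda>_. {-R..R})) x * indicator {a..b} y \<partial>lborel)"
      by (rule nn_integral_mono) (use ind in auto)
    also have "\<dots> = indicator (PiE I (\<lambda>_. {-R..R})) x * emeasure lborel {a..b}"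
      by (subst nn_integral_cmult_indicator) auto
    also have "emeasure lborel {a..b} = ennreal (2*\<delta>/\<bar>v$k\<bar>)"
      using d by (simp add: a_def b_def)
    finally show "(\<integral>\<^sup>+ y. indicator S' (x(k := y)) \<partial>lborel) \<le> ennreal (2*\<delta>/\<bar>v$k\<bar>) * indicator (PiE I (\<lambda>_. {-R..R})) x"
      by (simp add: mult.commute fun_upd_def)
  qed
  also have "\<dots> = ennreal (2*\<delta>/\<bar>v$k\<bar>) * emeasure (PiM I (\<lambda>_. lborel)) (PiE I (\<lambda>_. {-R..R}))"
    by (rule nn_integral_cmult_indicator) (simp add: sets_PiM_I_finite UI)
  also have "emeasure (PiM I (\<lambda>_. lborel)) (PiE I (\<lambda>_. {-R..R})) = (\<Prod>i\<in>I. emeasure lborel {-R..R})"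
    by (rule emeasure_PiM) (auto simp: UI)
  also have "\<dots> = ennreal ((2*R)^(CARD('m)-1))"
  proof -
    have "(\<Prod>i\<in>I. emeasure lborel {-R..R}) = (\<Prod>i\<in>I. ennreal (2*R))" using R by simp
    also have "\<dots> = ennreal (2*R) ^ card I" by simp
    also have "\<dots> = ennreal ((2*R)^card I)" using R by (intro ennreal_power) simp
    also have "card I = CARD('m) - 1" by (simp add: I_def card_Diff_singleton)
    finally show ?thesis .
  qed
  finally have "emeasure lborel S \<le> ennreal (2*\<delta>/\<bar>v$k\<bar>) * ennreal ((2*R)^(CARD('m)-1))" .
  also have "\<dots> = ennreal ((2*R)^(CARD('m)-1) * (2*\<delta>/\<bar>v$k\<bar>))"
    using d R by (subst ennreal_mult) (auto simp: mult.commute)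
  finally show ?thesis unfolding S_def .
qed



lemma meas_vec_nth[measurable]: "(\<lambda>x::('a::real_normed_vector)^'n. x$i) \<in> borel_measurable borel"
  by (intro borel_measurable_continuous_onI linear_continuous_on bounded_linear_vec_nth)

lemma matrix_slab_measure:
  fixes v :: "real^'m" and k :: 'm
  assumes vk: "v$k \<noteq> 0" and R: "R \<ge> 0" and d: "\<delta> \<ge> 0"
  shows "emeasure lborel {A::real^'m^'n. \<forall>i. (\<forall>j. \<bar>A$i$j\<bar> \<le> R) \<and> \<bar>A$i \<bullet> v\<bar> \<le> \<delta>}
          \<le> ennreal (((2*R)^(CARD('m)-1) * (2*\<delta>/\<bar>v$k\<bar>))^CARD('n))"
proof -
  interpret product_sigma_finite "\<lambda>_::'n. lborel :: (real^'m) measure" by standard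
  define Sl where "Sl = {a::real^'m. (\<forall>j. \<bar>a$j\<bar> \<le> R) \<and> \<bar>a \<bullet> v\<bar> \<le> \<delta>}"
  define S where "S = {A::real^'m^'n. \<forall>i. (\<forall>j. \<bar>A$i$j\<bar> \<le> R) \<and> \<bar>A$i \<bullet> v\<bar> \<le> \<delta>}"
  define b where "b = (2*R)^(CARD('m)-1) * (2*\<delta>/\<bar>v$k\<bar>)"
  have b0: "b \<ge> 0" using R d by (simp add: b_def)
  have Slm: "Sl \<in> sets borel" unfolding Sl_def by measurable
  have Sm: "S \<in> sets borel" unfolding S_def by measurable
  have "emeasure lborel S = emeasure (distr (PiM UNIV (\<lambda>_::'n. lborel :: (real^'m) measure)) borel vec_lambda) S"
    by (simp add: lborel_vec[symmetric])
  also have "\<dots> = emeasure (PiM UNIV (\<lambda>_::'n. lborel :: (real^'m) measure)) (vec_lambda -` S \<inter> space (PiM UNIV (\<lambda>_::'n. lborel :: (real^'m) measure)))"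
    by (rule emeasure_distr) (use vec_lambda_meas Sm in auto)
  also have "vec_lambda -` S \<inter> space (PiM UNIV (\<lambda>_::'n. lborel :: (real^'m) measure)) = PiE UNIV (\<lambda>_. Sl)"
    by (auto simp: S_def Sl_def space_PiM PiE_iff)
  also have "emeasure (PiM UNIV (\<lambda>_::'n. lborel :: (real^'m) measure)) (PiE UNIV (\<lambda>_. Sl)) = (\<Prod>i\<in>(UNIV::'n set). emeasure lborel Sl)"
    by (rule emeasure_PiM) (use Slm in auto)
  also have "\<dots> \<le> (\<Prod>i\<in>(UNIV::'n set). ennreal b)"
    by (rule prod_mono_ennreal) (use slab_measure[OF vk R d] in \<open>auto simp: Sl_def b_def\<close>)
  also have "\<dots> = ennreal (b ^ CARD('n))" using b0 by (simp add: ennreal_power)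
  finally show ?thesis by (simp add: S_def b_def)
qed



lemma row_inner: "((A::real^'m^'n) *v w) $ i = A$i \<bullet> w"
  by (simp add: matrix_vector_mult_def inner_vec_def)

lemma abs_inner_l1: "\<bar>(a::real^'m) \<bullet> w\<bar> \<le> (\<Sum>j\<in>UNIV. \<bar>a$j\<bar>) * norm w"
proof -
  have "\<bar>a \<bullet> w\<bar> \<le> norm a * norm w" by (rule Cauchy_Schwarz_ineq2)
  also have "\<dots> \<le> (\<Sum>j\<in>UNIV. \<bar>a$j\<bar>) * norm w" by (intro mult_right_mono norm_le_l1_cart) auto
  finally show ?thesis .
qed

lemma exists_max_coord: "\<exists>k. \<forall>j. \<bar>(v::real^'m)$j\<bar> \<le> \<bar>v$k\<bar>"
proof -
  have "Max (range (\<lambda>j. \<bar>v$j\<bar>)) \<in> range (\<lambda>j. \<bar>v$j\<bar>)" by (intro Max_in) auto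
  then obtain k where k: "Max (range (\<lambda>j. \<bar>v$j\<bar>)) = \<bar>v$k\<bar>" by (metis rangeE)
  have "\<bar>v$j\<bar> \<le> \<bar>v$k\<bar>" for j unfolding k[symmetric] by (intro Max_ge) auto
  then show ?thesis by blast
qed

lemma null_piece:
  fixes W :: "(real^'m) set" and x :: "real^'m" and R r s :: real
  assumes thin: "\<And>e. e>0 \<Longrightarrow> \<exists>\<rho> C. 0<\<rho> \<and> \<rho><e \<and> finite C \<and> W \<subseteq> (\<Union>c\<in>C. ball c \<rho>) \<and> real (card C) \<le> \<rho> powr (-s)"
    and sn: "s < real CARD('n)" and R: "R \<ge> 0" and r: "r > 0"
  shows "negligible {A :: real^'m^'n. (\<forall>i j. \<bar>A$i$j\<bar> \<le> R) \<and> (\<exists>u\<in>closure W. dist u x \<ge> r \<and> A *v u = A *v x)}"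
proof (unfold negligible_outer_le, intro allI impI)
  fix e :: real assume e: "e > 0"
  define mm where "mm = real CARD('m)"
  define nn where "nn = CARD('n)"
  have mm0: "mm > 0" by (simp add: mm_def)
  define Kc where "Kc = (2*R)^(CARD('m)-1) * (2 * (mm*R) * (2*mm/r))"
  have Kc0: "Kc \<ge> 0" using R r mm0 by (simp add: Kc_def)
  define \<rho>0 where "\<rho>0 = min (r/2) ((e / (Kc^nn + 1)) powr (1/(nn - s)))"
  have ns: "nn - s > 0" using sn by (simp add: nn_def)
  have eK: "e / (Kc^nn + 1) > 0" by (meson Kc0 add_nonneg_pos divide_pos_pos e zero_le_power zero_less_one)
  have Kp: "Kc^nn + 1 > 0" by (meson Kc0 add_nonneg_pos zero_le_power zero_less_one)
  have "(e / (Kc^nn + 1)) powr (1/(nn - s)) > 0" using e Kp by simp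
  hence \<rho>0: "\<rho>0 > 0" using r by (simp add: \<rho>0_def)
  obtain \<rho> C where \<rho>: "0 < \<rho>" "\<rho> < \<rho>0" "finite C" "W \<subseteq> (\<Union>c\<in>C. ball c \<rho>)" "real (card C) \<le> \<rho> powr (-s)"
    using thin[OF \<rho>0] by blast
  define C' where "C' = {c\<in>C. dist c x \<ge> r/2}"
  define S where "S c = {A::real^'m^'n. \<forall>i. (\<forall>j. \<bar>A$i$j\<bar> \<le> R) \<and> \<bar>A$i \<bullet> (c - x)\<bar> \<le> mm*R*\<rho>}" for c
  define T where "T = (\<Union>c\<in>C'. S c)"
  have fC': "finite C'" using \<rho>(3) by (simp add: C'_def)
  have Sm: "S c \<in> sets borel" for c unfolding S_def by measurable
  have Sml: "S c \<in> sets lebesgue" for c using Sm[of c] by simp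
  have Tml: "T \<in> sets lebesgue" unfolding T_def using fC' Sml by blast
  have Tb: "bounded T"
  proof -
    have "norm A \<le> real CARD('n) * (mm * R)" if "A \<in> T" for A
    proof -
      from that have Aij: "\<bar>A$i$j\<bar> \<le> R" for i j by (auto simp: T_def S_def)
      have rows: "norm (A$i) \<le> mm * R" for i
      proof -
        have "norm (A$i) \<le> (\<Sum>j\<in>UNIV. \<bar>A$i$j\<bar>)" by (rule norm_le_l1_cart)
        also have "\<dots> \<le> mm * R" using sum_bounded_above[of UNIV "\<lambda>j. \<bar>A$i$j\<bar>" R] Aij by (simp add: mm_def)
        finally show ?thesis .
      qed
      have "norm A \<le> (\<Sum>i\<in>UNIV. norm (A$i))" unfolding norm_vec_def by (rule L2_set_le_sum) simp
      also have "\<dots> \<le> real CARD('n) * (mm * R)" using sum_bounded_above[of UNIV "\<lambda>i. norm (A$i)" "mm*R"] rows by simp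
      finally show ?thesis .
    qed
    then show ?thesis unfolding bounded_iff by blast
  qed
  show "\<exists>T. {A :: real^'m^'n. (\<forall>i j. \<bar>A$i$j\<bar> \<le> R) \<and> (\<exists>u\<in>closure W. dist u x \<ge> r \<and> A *v u = A *v x)} \<subseteq> T \<and> T \<in> lmeasurable \<and> measure lebesgue T \<le> e"
  proof (intro exI conjI)
    show "T \<in> lmeasurable" by (rule bounded_set_imp_lmeasurable[OF Tb Tml])
    show "{A :: real^'m^'n. (\<forall>i j. \<bar>A$i$j\<bar> \<le> R) \<and> (\<exists>u\<in>closure W. dist u x \<ge> r \<and> A *v u = A *v x)} \<subseteq> T"
    proof safe
      fix A :: "real^'m^'n" and u assume Aij: "\<forall>i j. \<bar>A$i$j\<bar> \<le> R" and u: "u \<in> closure W" "r \<le> dist u x" "A *v u = A *v x"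
      have "closure W \<subseteq> (\<Union>c\<in>C. cball c \<rho>)"
      proof (rule closure_minimal)
        have "(\<Union>c\<in>C. ball c \<rho>) \<subseteq> (\<Union>c\<in>C. cball c \<rho>)" by (intro UN_mono) auto
        then show "W \<subseteq> (\<Union>c\<in>C. cball c \<rho>)" using \<rho>(4) by (rule order_trans[rotated])
        show "closed (\<Union>c\<in>C. cball c \<rho>)" using \<rho>(3) by (intro closed_UN) auto
      qed
      then obtain c where c: "c \<in> C" "dist c u \<le> \<rho>" using u(1) by auto
      have "\<rho> \<le> r/2" using \<rho>(2) by (simp add: \<rho>0_def)
      hence "dist c x \<ge> r/2" using c(2) u(2) dist_triangle[of u x c] by (simp add: dist_commute)
      hence cC': "c \<in> C'" using c(1) by (simp add: C'_def)
      have "A \<in> S c" unfolding S_def mem_Collect_eq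
      proof (intro allI conjI)
        fix i j show "\<bar>A$i$j\<bar> \<le> R" using Aij by blast
      next
        fix i
        have "A$i \<bullet> (c - x) = A$i \<bullet> (c - u) + A$i \<bullet> (u - x)" by (simp add: inner_diff_right)
        also have "A$i \<bullet> (u - x) = 0"
        proof -
          have "(A *v u)$i = (A *v x)$i" using u(3) by simp
          hence "A$i \<bullet> u = A$i \<bullet> x" by (simp only: row_inner)
          thus ?thesis by (simp add: inner_diff_right)
        qed
        finally have "\<bar>A$i \<bullet> (c - x)\<bar> = \<bar>A$i \<bullet> (c - u)\<bar>" by simp
        also have "\<dots> \<le> (\<Sum>j\<in>UNIV. \<bar>A$i$j\<bar>) * norm (c - u)" by (rule abs_inner_l1)
        also have "\<dots> \<le> (mm * R) * \<rho>"
        proof (rule mult_mono)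
          show "(\<Sum>j\<in>UNIV. \<bar>A$i$j\<bar>) \<le> mm * R"
            using sum_bounded_above[of UNIV "\<lambda>j. \<bar>A$i$j\<bar>" R] Aij by (simp add: mm_def)
          show "norm (c - u) \<le> \<rho>" using c(2) by (simp add: dist_norm)
        qed (use R mm0 in auto)
        finally show "\<bar>A$i \<bullet> (c - x)\<bar> \<le> mm * R * \<rho>" by simp
      qed
      then show "A \<in> T" using cC' by (auto simp: T_def)
    qed
    have Sbound: "measure lebesgue (S c) \<le> (Kc * \<rho>)^nn" if "c \<in> C'" for c
    proof -
      define v where "v = c - x"
      obtain k where k: "\<forall>j. \<bar>v$j\<bar> \<le> \<bar>v$k\<bar>" using exists_max_coord by blast
      have "r/2 \<le> norm v" using that by (simp add: C'_def v_def dist_norm)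
      also have "\<dots> \<le> (\<Sum>j\<in>UNIV. \<bar>v$j\<bar>)" by (rule norm_le_l1_cart)
      also have "\<dots> \<le> mm * \<bar>v$k\<bar>"
        using sum_bounded_above[of UNIV "\<lambda>j. \<bar>v$j\<bar>" "\<bar>v$k\<bar>"] k by (simp add: mm_def)
      finally have vk: "r/2 \<le> mm * \<bar>v$k\<bar>" .
      hence vk0: "v$k \<noteq> 0" using r by auto
      have d0: "mm*R*\<rho> \<ge> 0" using mm0 R \<rho>(1) by simp
      have "emeasure lborel (S c) \<le> ennreal (((2*R)^(CARD('m)-1) * (2*(mm*R*\<rho>)/\<bar>v$k\<bar>))^CARD('n))"
        unfolding S_def v_def[symmetric] by (rule matrix_slab_measure[OF vk0 R d0])
      hence "measure lborel (S c) \<le> ((2*R)^(CARD('m)-1) * (2*(mm*R*\<rho>)/\<bar>v$k\<bar>))^CARD('n)"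
        unfolding measure_def by (intro enn2real_leI) (use R d0 in auto)
      also have "\<dots> \<le> (Kc * \<rho>)^nn"
      proof (unfold nn_def, rule power_mono)
        have "1/\<bar>v$k\<bar> \<le> 2*mm/r" using vk vk0 r mm0 by (simp add: field_simps)
        hence "2*(mm*R*\<rho>)/\<bar>v$k\<bar> \<le> 2*(mm*R*\<rho>) * (2*mm/r)"
        proof -
          have "2*(mm*R*\<rho>)/\<bar>v$k\<bar> = 2*(mm*R*\<rho>) * (1/\<bar>v$k\<bar>)" by simp
          also have "\<dots> \<le> 2*(mm*R*\<rho>) * (2*mm/r)" using d0 \<open>1/\<bar>v$k\<bar> \<le> 2*mm/r\<close> by (intro mult_left_mono) auto
          finally show ?thesis .
        qed
        hence "(2*R)^(CARD('m)-1) * (2*(mm*R*\<rho>)/\<bar>v$k\<bar>) \<le> (2*R)^(CARD('m)-1) * (2*(mm*R*\<rho>) * (2*mm/r))"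
          using R by (intro mult_left_mono) auto
        also have "\<dots> = Kc * \<rho>" by (simp add: Kc_def algebra_simps)
        finally show "(2*R)^(CARD('m)-1) * (2*(mm*R*\<rho>)/\<bar>v$k\<bar>) \<le> Kc * \<rho>" .
        show "0 \<le> (2*R)^(CARD('m)-1) * (2*(mm*R*\<rho>)/\<bar>v$k\<bar>)" using R d0 by simp
      qed
      finally show ?thesis using Sm by simp
    qed
    have "measure lebesgue T \<le> (\<Sum>c\<in>C'. measure lebesgue (S c))"
      unfolding T_def by (rule measure_UNION_le[OF fC' Sml])
    also have "\<dots> \<le> (\<Sum>c\<in>C'. (Kc * \<rho>)^nn)" by (rule sum_mono) (rule Sbound)
    also have "\<dots> = real (card C') * (Kc * \<rho>)^nn" by simp
    also have "\<dots> \<le> real (card C) * (Kc * \<rho>)^nn"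
      using \<rho>(3) Kc0 \<rho>(1) by (intro mult_right_mono) (auto simp: C'_def intro!: card_mono)
    also have "\<dots> \<le> \<rho> powr (-s) * (Kc * \<rho>)^nn"
      using \<rho>(5) Kc0 \<rho>(1) by (intro mult_right_mono) auto
    also have "\<dots> = Kc^nn * (\<rho> powr (-s) * \<rho>^nn)"
      by (simp add: power_mult_distrib)
    also have "\<dots> = Kc^nn * \<rho> powr (nn - s)"
    proof -
      have "\<rho> powr (-s) * \<rho>^nn = \<rho> powr (-s) * \<rho> powr (real nn)" using \<rho>(1) by (simp add: powr_realpow)
      also have "\<dots> = \<rho> powr (-s + real nn)" by (rule powr_add[symmetric])
      also have "-s + real nn = real nn - s" by simp
      finally show ?thesis by simp
    qed
    also have "\<dots> \<le> Kc^nn * \<rho>0 powr (nn - s)"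
      using \<rho> ns Kc0 by (intro mult_left_mono powr_mono2) auto
    also have "\<rho>0 powr (nn - s) \<le> ((e / (Kc^nn + 1)) powr (1/(nn - s))) powr (nn - s)"
      using \<rho>0 ns by (intro powr_mono2) (auto simp: \<rho>0_def)
    also have "\<dots> = e / (Kc^nn + 1)" using eK ns e Kp by (simp add: powr_powr)
    finally have "measure lebesgue T \<le> Kc^nn * (e / (Kc^nn + 1))"
      using Kc0 by (simp add: mult_left_mono)
    also have "\<dots> = e * (Kc^nn / (Kc^nn + 1))" by simp
    also have "\<dots> \<le> e * 1" using e Kp by (intro mult_left_mono) auto
    also have "\<dots> = e" by simp
    finally show "measure lebesgue T \<le> e" .
  qed
qed



definition Pg :: "(nat \<Rightarrow> nat \<Rightarrow> real^'m) \<Rightarrow> nat \<Rightarrow> real^'m^'n \<Rightarrow> real^'n \<Rightarrow> bool" where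
  "Pg d i A y \<longleftrightarrow> (\<forall>k::nat. \<exists>l. norm (A *v d i l - y) < 1 / real (Suc k))"

definition hsel :: "(nat \<Rightarrow> nat \<Rightarrow> real^'m) \<Rightarrow> nat \<Rightarrow> nat \<Rightarrow> real^'m^'n \<Rightarrow> real^'n \<Rightarrow> real^'m" where
  "hsel d i k A y = d i (LEAST l. norm (A *v d i l - y) < 1 / real (Suc k))"

definition gdec :: "(nat \<Rightarrow> nat \<Rightarrow> real^'m) \<Rightarrow> (real^'m^'n) \<times> (real^'n) \<Rightarrow> real^'m" where
  "gdec d p = lim (\<lambda>k. hsel d (LEAST i. Pg d i (fst p) (snd p)) k (fst p) (snd p))"

lemma cont_mv:
  assumes "continuous_on S f" "continuous_on S g"
  shows "continuous_on S (\<lambda>p. (f p :: real^'m^'n) *v (g p :: real^'m))"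
proof -
  have c: "continuous_on S (\<lambda>p. f p $ i $ j)" for i j
    using bounded_linear.continuous_on[OF bounded_linear_vec_nth[of j],
          OF bounded_linear.continuous_on[OF bounded_linear_vec_nth[of i], OF assms(1)]] .
  have c2: "continuous_on S (\<lambda>p. g p $ j)" for j
    using bounded_linear.continuous_on[OF bounded_linear_vec_nth[of j], OF assms(2)] .
  show ?thesis unfolding matrix_vector_mult_def
    by (intro continuous_on_vec_lambda continuous_on_sum continuous_on_mult c c2)
qed

lemma meas_resid[measurable]:
  "(\<lambda>p::((real^'m^'n) \<times> (real^'n)). norm (fst p *v w - snd p)) \<in> borel_measurable borel"
proof (rule borel_measurable_continuous_onI)
  have "continuous_on UNIV (\<lambda>p::((real^'m^'n) \<times> (real^'n)). fst p *v w)"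
    by (intro cont_mv continuous_intros)
  then show "continuous_on UNIV (\<lambda>p::((real^'m^'n) \<times> (real^'n)). norm (fst p *v w - snd p))"
    by (intro continuous_intros)
qed

lemma gdec_meas:
  fixes d :: "nat \<Rightarrow> nat \<Rightarrow> real^'m"
  shows "(gdec d :: (real^'m^'n) \<times> (real^'n) \<Rightarrow> real^'m) \<in> borel_measurable borel"
proof -
  have P: "Measurable.pred borel (\<lambda>p::((real^'m^'n) \<times> (real^'n)). Pg d i (fst p) (snd p))" for i
    unfolding Pg_def by measurable
  have I: "(\<lambda>p::((real^'m^'n) \<times> (real^'n)). LEAST i. Pg d i (fst p) (snd p)) \<in> borel \<rightarrow>\<^sub>M count_space UNIV"
    by (rule measurable_Least) (use P in auto)
  have L: "(\<lambda>p::((real^'m^'n) \<times> (real^'n)). LEAST l. norm (fst p *v d i l - snd p) < 1 / real (Suc k)) \<in> borel \<rightarrow>\<^sub>M count_space UNIV" for i k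
    by (rule measurable_Least) measurable
  have H: "(\<lambda>p::((real^'m^'n) \<times> (real^'n)). hsel d i k (fst p) (snd p)) \<in> borel_measurable borel" for i k
    unfolding hsel_def by (rule measurable_compose[OF L]) simp
  have H2: "(\<lambda>p::((real^'m^'n) \<times> (real^'n)). hsel d (LEAST i. Pg d i (fst p) (snd p)) k (fst p) (snd p)) \<in> borel_measurable borel" for k
    by (rule measurable_compose_countable[OF H I])
  show ?thesis unfolding gdec_def[abs_def]
    by (rule borel_measurable_lim_metric) (rule H2)
qed

lemma resid_cont: "continuous_on S (\<lambda>u. norm ((A::real^'m^'n) *v u - y))"
  by (intro continuous_intros)

lemma gdec_correct:
  fixes K :: "nat \<Rightarrow> (real^'m) set" and d :: "nat \<Rightarrow> nat \<Rightarrow> real^'m" and A :: "real^'m^'n"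
  assumes Kc: "\<And>i. compact (K i)" and dK: "\<And>i l. d i l \<in> K i"
    and dense: "\<And>i. K i \<subseteq> closure (range (d i))"
    and z: "z \<in> K i0" and good: "\<not>(\<exists>i. \<exists>u\<in>K i. u \<noteq> z \<and> A *v u = A *v z)"
  shows "gdec d (A, A *v z) = z"
proof -
  define y where "y = A *v z"
  have P0: "Pg d i0 A y" unfolding Pg_def
  proof
    fix k :: nat
    obtain B where B: "B > 0" "\<And>w. norm (A *v w) \<le> norm w * B"
      using bounded_linear.pos_bounded[OF linear_conv_bounded_linear[THEN iffD1, OF matrix_vector_mul_linear[of A]]]
      by blast
    have "z \<in> closure (range (d i0))" using dense z by blast
    then obtain w where w: "w \<in> range (d i0)" "dist w z < (1 / real (Suc k)) / B"
      using B(1) unfolding closure_approachable by (metis divide_pos_pos of_nat_0_less_iff zero_less_Suc zero_less_one)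
    then obtain l where l: "w = d i0 l" by blast
    have "norm (A *v d i0 l - y) = norm (A *v (d i0 l - z))"
      by (simp add: y_def matrix_vector_mult_diff_distrib)
    also have "\<dots> \<le> norm (d i0 l - z) * B" by (rule B(2))
    also have "\<dots> < (1 / real (Suc k)) / B * B"
      using w l B(1) by (intro mult_strict_right_mono) (auto simp: dist_norm)
    also have "\<dots> = 1 / real (Suc k)" using B(1) by simp
    finally show "\<exists>l. norm (A *v d i0 l - y) < 1 / real (Suc k)" by blast
  qed
  define ist where "ist = (LEAST i. Pg d i A y)"
  have Pist: "Pg d ist A y" unfolding ist_def by (rule LeastI[of _ i0]) (rule P0)
  have hk: "hsel d ist k A y \<in> K ist \<and> norm (A *v hsel d ist k A y - y) < 1 / real (Suc k)" for k
  proof -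
    have "\<exists>l. norm (A *v d ist l - y) < 1 / real (Suc k)" using Pist unfolding Pg_def by blast
    then have "norm (A *v d ist (LEAST l. norm (A *v d ist l - y) < 1 / real (Suc k)) - y) < 1 / real (Suc k)"
      by (rule LeastI_ex)
    then show ?thesis using dK unfolding hsel_def by blast
  qed
  have Kne: "K ist \<noteq> {}" using dK by blast
  obtain u0 where u0: "u0 \<in> K ist" "\<And>v. v \<in> K ist \<Longrightarrow> norm (A *v u0 - y) \<le> norm (A *v v - y)"
    using continuous_attains_inf[OF Kc Kne resid_cont] by blast
  have "norm (A *v u0 - y) = 0"
  proof (rule ccontr)
    assume "norm (A *v u0 - y) \<noteq> 0"
    hence "norm (A *v u0 - y) > 0" by simp
    then obtain n where n: "n > 0" "inverse (real n) < norm (A *v u0 - y)"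
      using ex_inverse_of_nat_less by blast
    then obtain k where k: "n = Suc k" using gr0_implies_Suc by blast
    have "norm (A *v u0 - y) \<le> norm (A *v hsel d ist k A y - y)" using u0(2) hk by blast
    also have "\<dots> < 1 / real (Suc k)" using hk by blast
    finally show False using n k by (simp add: inverse_eq_divide)
  qed
  hence "A *v u0 = A *v z" by (simp add: y_def)
  hence u0z: "u0 = z" using good u0(1) by blast
  have lim: "(\<lambda>k. hsel d ist k A y) \<longlonglongrightarrow> z"
  proof (rule tendstoI)
    fix e :: real assume e: "e > 0"
    define C where "C = {u \<in> K ist. e \<le> dist u z}"
    have Cc: "compact C"
    proof -
      have "C = K ist \<inter> {u. e \<le> dist u z}" by (auto simp: C_def)
      moreover have "closed {u. e \<le> dist u z}" by (intro closed_Collect_le continuous_intros)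
      ultimately show ?thesis using Kc by (simp add: compact_Int_closed)
    qed
    show "eventually (\<lambda>k. dist (hsel d ist k A y) z < e) sequentially"
    proof (cases "C = {}")
      case True
      then show ?thesis using hk by (auto simp: C_def not_le)
    next
      case False
      obtain u1 where u1: "u1 \<in> C" "\<And>v. v \<in> C \<Longrightarrow> norm (A *v u1 - y) \<le> norm (A *v v - y)"
        using continuous_attains_inf[OF Cc False resid_cont] by blast
      have "u1 \<noteq> z" using u1(1) e by (auto simp: C_def)
      moreover have "u1 \<in> K ist" using u1(1) by (simp add: C_def)
      ultimately have "A *v u1 \<noteq> A *v z" using good by blast
      hence mu: "norm (A *v u1 - y) > 0" by (simp add: y_def)
      then obtain n where n: "n > 0" "inverse (real n) < norm (A *v u1 - y)"
        using ex_inverse_of_nat_less by blast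
      then obtain k0 where k0: "n = Suc k0" using gr0_implies_Suc by blast
      show ?thesis unfolding eventually_sequentially
      proof (intro exI allI impI)
        fix k assume kk: "k0 \<le> k"
        have "norm (A *v hsel d ist k A y - y) < 1 / real (Suc k)" using hk by blast
        also have "\<dots> \<le> 1 / real (Suc k0)" using kk by (intro divide_left_mono) auto
        also have "\<dots> < norm (A *v u1 - y)" using n k0 by (simp add: inverse_eq_divide)
        finally have "hsel d ist k A y \<notin> C" using u1(2) by (meson not_le)
        then show "dist (hsel d ist k A y) z < e" using hk by (auto simp: C_def not_le)
      qed
    qed
  qed
  have "gdec d (A, A *v z) = lim (\<lambda>k. hsel d ist k A y)"
    by (simp add: gdec_def ist_def y_def)
  also have "\<dots> = z" using lim by (rule limI)
  finally show ?thesis .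
qed

lemma null_section:
  fixes W :: "(real^'m) set" and x :: "real^'m"
  assumes "lower_box_dim W < ereal (real CARD('n))"
  shows "negligible {A :: real^'m^'n. \<exists>u\<in>closure W. u \<noteq> x \<and> A *v u = A *v x}"
proof -
  obtain s where s: "lower_box_dim W < ereal s" "ereal s < ereal (real CARD('n))"
    using ereal_dense2[OF assms] by blast
  have sn: "s < real CARD('n)" using s(2) by simp
  have thin: "\<And>e. e>0 \<Longrightarrow> \<exists>\<rho> C. 0<\<rho> \<and> \<rho><e \<and> finite C \<and> W \<subseteq> (\<Union>c\<in>C. ball c \<rho>) \<and> real (card C) \<le> \<rho> powr (-s)"
    by (rule lbd_thin[OF s(1)])
  define N where "N R r = {A :: real^'m^'n. (\<forall>i j. \<bar>A$i$j\<bar> \<le> real R) \<and> (\<exists>u\<in>closure W. dist u x \<ge> 1 / real (Suc r) \<and> A *v u = A *v x)}" for R r :: nat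
  have negN: "negligible (N R r)" for R r
    unfolding N_def by (rule null_piece[OF thin sn]) auto
  have "negligible (\<Union>R. \<Union>r. N R r)"
    by (intro negligible_Union_nat) (rule negN)
  moreover have "{A :: real^'m^'n. \<exists>u\<in>closure W. u \<noteq> x \<and> A *v u = A *v x} \<subseteq> (\<Union>R. \<Union>r. N R r)"
  proof
    fix A :: "real^'m^'n" assume "A \<in> {A. \<exists>u\<in>closure W. u \<noteq> x \<and> A *v u = A *v x}"
    then obtain u where u: "u \<in> closure W" "u \<noteq> x" "A *v u = A *v x" by blast
    have "dist u x > 0" using u(2) by simp
    then obtain n where n: "n > 0" "inverse (real n) < dist u x"
      using ex_inverse_of_nat_less by blast
    then obtain r where r: "n = Suc r" using gr0_implies_Suc by blast
    have "\<bar>A$i$j\<bar> \<le> real (nat \<lceil>norm A\<rceil>)" for i j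
    proof -
      have "\<bar>A$i$j\<bar> \<le> norm (A$i)" by (rule component_le_norm_cart)
      also have "\<dots> \<le> norm A" by (rule Finite_Cartesian_Product.norm_nth_le)
      also have "\<dots> \<le> real (nat \<lceil>norm A\<rceil>)" by linarith
      finally show ?thesis .
    qed
    moreover have "dist u x \<ge> 1 / real (Suc r)" using n r by (simp add: inverse_eq_divide)
    ultimately have "A \<in> N (nat \<lceil>norm A\<rceil>) r" using u unfolding N_def by blast
    then show "A \<in> (\<Union>R. \<Union>r. N R r)" by blast
  qed
  ultimately show ?thesis by (rule negligible_subset)
qed

lemma bad_closed:
  fixes K :: "(real^'m) set"
  assumes "compact K"
  shows "closed {p :: (real^'m) \<times> (real^'m^'n). \<exists>u\<in>K. 1 / real (Suc k) \<le> dist u (fst p) \<and> snd p *v u = snd p *v fst p}"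
proof -
  have "closed {q :: (real^'m) \<times> ((real^'m) \<times> (real^'m^'n)). 1 / real (Suc k) \<le> dist (fst q) (fst (snd q)) \<and> snd (snd q) *v fst q = snd (snd q) *v fst (snd q)}"
  proof (intro closed_Collect_conj closed_Collect_le closed_Collect_eq)
    show "continuous_on UNIV (\<lambda>q :: (real^'m) \<times> ((real^'m) \<times> (real^'m^'n)). snd (snd q) *v fst q)"
      by (intro cont_mv continuous_intros)
    show "continuous_on UNIV (\<lambda>q :: (real^'m) \<times> ((real^'m) \<times> (real^'m^'n)). snd (snd q) *v fst (snd q))"
      by (intro cont_mv continuous_intros)
  qed (intro continuous_intros)+
  from closed_compact_projection[OF assms this]
  show ?thesis by (simp add: Bex_def)
qed

theorem theorem1:
  fixes M :: "'w measure" and X :: "'w \<Rightarrow> real ^ 'm"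
  assumes "prob_space M"
    and "X \<in> borel_measurable M"
    and "CARD('n) \<le> CARD('m)"
    and "ereal (real CARD('n)) > description_complexity M X"
  shows "\<exists>g :: (real ^ 'm ^ 'n) \<times> (real ^ 'n) \<Rightarrow> real ^ 'm.
           g \<in> borel_measurable borel \<and>
           (AE A in lebesgue.
              measure M {\<omega> \<in> space M. g (A, A *v X \<omega>) \<noteq> X \<omega>} = 0)"
proof -
  interpret P: prob_space M by (rule assms(1))
  have "description_complexity M X < ereal (real CARD('n))" using assms(4) by simp
  then obtain U where U: "support_set M X U" "lower_mod_box_dim U < ereal (real CARD('n))"
    unfolding description_complexity_def INF_less_iff by blast
  then obtain W :: "nat \<Rightarrow> (real^'m) set" where W: "\<forall>i. W i \<noteq> {} \<and> bounded (W i)" "U \<subseteq> (\<Union>i. W i)"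
      "(SUP i. lower_box_dim (W i)) < ereal (real CARD('n))"
    unfolding lower_mod_box_dim_def INF_less_iff by blast
  have Wd: "lower_box_dim (W i) < ereal (real CARD('n))" for i
    using W(3) by (meson SUP_upper UNIV_I le_less_trans)
  define K where "K i = closure (W i)" for i
  have Kc: "compact (K i)" for i using W(1) by (simp add: K_def compact_closure)
  have Kne: "K i \<noteq> {}" for i using W(1) by (simp add: K_def)
  have "\<forall>i. \<exists>f::nat \<Rightarrow> real^'m. (\<forall>l. f l \<in> K i) \<and> K i \<subseteq> closure (range f)"
  proof
    fix i
    obtain T where T: "countable T" "T \<subseteq> K i" "K i \<subseteq> closure T" by (rule separable)
    have Tne: "T \<noteq> {}" using T(3) Kne[of i] by auto
    show "\<exists>f::nat \<Rightarrow> real^'m. (\<forall>l. f l \<in> K i) \<and> K i \<subseteq> closure (range f)"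
    proof (intro exI[of _ "from_nat_into T"] conjI allI)
      fix l show "from_nat_into T l \<in> K i" using from_nat_into[OF Tne, of l] T(2) by blast
      show "K i \<subseteq> closure (range (from_nat_into T))" using T Tne by simp
    qed
  qed
  from choice[OF this] obtain d :: "nat \<Rightarrow> nat \<Rightarrow> real^'m" where dd: "\<forall>i. (\<forall>l. d i l \<in> K i) \<and> K i \<subseteq> closure (range (d i))" by (rule exE) iprover
  hence d: "\<And>i l. d i l \<in> K i" "\<And>i. K i \<subseteq> closure (range (d i))" by blast+
  define g where "g = (gdec d :: (real^'m^'n) \<times> (real^'n) \<Rightarrow> real^'m)"
  have gm: "g \<in> borel_measurable borel" unfolding g_def by (rule gdec_meas)
  define Q where "Q A z \<longleftrightarrow> (\<exists>i. \<exists>u\<in>K i. u \<noteq> z \<and> A *v u = A *v z)" for A :: "real^'m^'n" and z :: "real^'m"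
  define D where "D = distr M borel X"
  interpret DP: prob_space D unfolding D_def by (rule P.prob_space_distr[OF assms(2)])
  interpret PS: pair_sigma_finite D "lborel :: (real^'m^'n) measure"
    by (intro pair_sigma_finite.intro DP.sigma_finite_measure_axioms sigma_finite_lborel)
  define Bset where "Bset = {p :: (real^'m) \<times> (real^'m^'n). Q (snd p) (fst p)}"
  have Beq: "Bset = (\<Union>i. \<Union>k. {p :: (real^'m) \<times> (real^'m^'n). \<exists>u\<in>K i. 1 / real (Suc k) \<le> dist u (fst p) \<and> snd p *v u = snd p *v fst p})"
  proof (intro equalityI subsetI)
    fix p :: "(real^'m) \<times> (real^'m^'n)" assume "p \<in> Bset"
    then obtain i u where u: "u \<in> K i" "u \<noteq> fst p" "snd p *v u = snd p *v fst p"
      by (auto simp: Bset_def Q_def)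
    have "dist u (fst p) > 0" using u(2) by simp
    then obtain n where n: "n > 0" "inverse (real n) < dist u (fst p)"
      using ex_inverse_of_nat_less by blast
    then obtain k where k: "n = Suc k" using gr0_implies_Suc by blast
    have "1 / real (Suc k) \<le> dist u (fst p)" using n k by (simp add: inverse_eq_divide)
    then show "p \<in> (\<Union>i. \<Union>k. {p :: (real^'m) \<times> (real^'m^'n). \<exists>u\<in>K i. 1 / real (Suc k) \<le> dist u (fst p) \<and> snd p *v u = snd p *v fst p})"
      using u by blast
  next
    fix p :: "(real^'m) \<times> (real^'m^'n)"
    assume "p \<in> (\<Union>i. \<Union>k. {p :: (real^'m) \<times> (real^'m^'n). \<exists>u\<in>K i. 1 / real (Suc k) \<le> dist u (fst p) \<and> snd p *v u = snd p *v fst p})"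
    then obtain i k u where u: "u \<in> K i" "1 / real (Suc k) \<le> dist u (fst p)" "snd p *v u = snd p *v fst p" by blast
    have "0 < 1 / real (Suc k)" by simp
    hence "u \<noteq> fst p" using u(2) by auto
    then show "p \<in> Bset" using u by (auto simp: Bset_def Q_def)
  qed
  have Ck: "{p :: (real^'m) \<times> (real^'m^'n). \<exists>u\<in>K i. 1 / real (Suc k) \<le> dist u (fst p) \<and> snd p *v u = snd p *v fst p} \<in> sets borel" for i k
    by (intro borel_closed bad_closed Kc)
  have Bb: "Bset \<in> sets borel"
    unfolding Beq by (intro sets.countable_UN image_subsetI Ck)
  have spair: "sets (D \<Otimes>\<^sub>M (lborel :: (real^'m^'n) measure)) = sets (borel :: ((real^'m) \<times> (real^'m^'n)) measure)"
  proof -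
    have "sets (D \<Otimes>\<^sub>M (lborel :: (real^'m^'n) measure)) = sets ((borel :: (real^'m) measure) \<Otimes>\<^sub>M (borel :: (real^'m^'n) measure))"
      by (intro sets_pair_measure_cong) (simp_all add: D_def)
    also have "\<dots> = sets (borel :: ((real^'m) \<times> (real^'m^'n)) measure)"
      by (rule arg_cong[where f=sets, OF borel_prod])
    finally show ?thesis .
  qed
  have Pmeas: "{x \<in> space (D \<Otimes>\<^sub>M (lborel :: (real^'m^'n) measure)). \<not> Q (snd x) (fst x)} \<in> sets (D \<Otimes>\<^sub>M (lborel :: (real^'m^'n) measure))"
  proof -
    have "{x \<in> space (D \<Otimes>\<^sub>M (lborel :: (real^'m^'n) measure)). \<not> Q (snd x) (fst x)} = UNIV - Bset"
      by (auto simp: space_pair_measure D_def Bset_def)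
    then show ?thesis using Bb spair by auto
  qed
  have sec: "AE A in lborel. \<not> Q A z" for z
  proof -
    have "{A. Q A z} = (\<Union>i. {A :: real^'m^'n. \<exists>u\<in>closure (W i). u \<noteq> z \<and> A *v u = A *v z})"
      by (auto simp: Q_def K_def)
    moreover have "negligible (\<Union>i. {A :: real^'m^'n. \<exists>u\<in>closure (W i). u \<noteq> z \<and> A *v u = A *v z})"
      by (intro negligible_Union_nat null_section Wd)
    ultimately have "{A. Q A z} \<in> null_sets lebesgue" by (simp add: negligible_iff_null_sets)
    hence "AE A in lebesgue. \<not> Q A z" by (rule AE_I') auto
    thus ?thesis by (simp add: AE_completion_iff)
  qed
  have "AE z in D. AE A in lborel. \<not> Q A z" using sec by simp
  hence AEA: "AE A in lborel. AE z in D. \<not> Q A z"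
    using PS.AE_commute[where P="\<lambda>z A. \<not> Q A z", OF Pmeas] by simp
  have supp: "AE \<omega> in M. X \<omega> \<in> U"
  proof -
    have "P.prob {\<omega> \<in> space M. X \<omega> \<in> U} = 1" using U(1) by (simp add: support_set_def)
    hence "AE \<omega> in M. \<omega> \<in> {\<omega> \<in> space M. X \<omega> \<in> U}" by (rule P.AE_prob_1)
    thus ?thesis by auto
  qed
  have main: "AE A in lborel. measure M {\<omega> \<in> space M. g (A, A *v X \<omega>) \<noteq> X \<omega>} = 0"
  proof (rule AE_mp[OF AEA], intro AE_I2 impI)
    fix A :: "real^'m^'n" assume AEz: "AE z in D. \<not> Q A z"
    have pm: "(\<lambda>z::real^'m. (z, A)) \<in> borel \<rightarrow>\<^sub>M (borel :: ((real^'m) \<times> (real^'m^'n)) measure)"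
      by (intro borel_measurable_continuous_onI continuous_intros)
    have "{z \<in> space borel. \<not> Q A z} = (\<lambda>z::real^'m. (z, A)) -` (UNIV - Bset) \<inter> space borel"
      by (auto simp: Bset_def)
    also have "\<dots> \<in> sets borel" using Bb by (intro measurable_sets[OF pm]) auto
    finally have Qm: "{z \<in> space borel. \<not> Q A z} \<in> sets borel" .
    have AEw: "AE \<omega> in M. \<not> Q A (X \<omega>)"
      using AEz unfolding D_def by (subst (asm) AE_distr_iff[OF assms(2) Qm])
    have good: "AE \<omega> in M. g (A, A *v X \<omega>) = X \<omega>"
      using AEw supp
    proof eventually_elim
      fix \<omega> assume q: "\<not> Q A (X \<omega>)" and xu: "X \<omega> \<in> U"
      then obtain i0 where "X \<omega> \<in> W i0" using W(2) by blast
      hence xi: "X \<omega> \<in> K i0" by (auto simp: K_def intro: closure_subset[THEN subsetD])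
      show "g (A, A *v X \<omega>) = X \<omega>" unfolding g_def
        by (rule gdec_correct[where K=K and d=d and A=A, OF Kc d(1) d(2) xi]) (use q in \<open>simp add: Q_def\<close>)
    qed
    have mvm: "(\<lambda>z::real^'m. A *v z) \<in> borel_measurable borel"
      by (intro borel_measurable_continuous_onI continuous_intros)
    have pm2: "(\<lambda>\<omega>. (A, A *v X \<omega>)) \<in> M \<rightarrow>\<^sub>M (borel :: ((real^'m^'n) \<times> (real^'n)) measure)"
    proof -
      have "(\<lambda>\<omega>. (A, A *v X \<omega>)) \<in> M \<rightarrow>\<^sub>M ((borel :: (real^'m^'n) measure) \<Otimes>\<^sub>M (borel :: (real^'n) measure))"
        by (intro measurable_Pair measurable_const measurable_compose[OF assms(2) mvm]) simp
      also have "((borel :: (real^'m^'n) measure) \<Otimes>\<^sub>M (borel :: (real^'n) measure)) = (borel :: ((real^'m^'n) \<times> (real^'n)) measure)"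
        by (rule borel_prod)
      finally show ?thesis .
    qed
    have gX: "(\<lambda>\<omega>. g (A, A *v X \<omega>)) \<in> borel_measurable M"
      by (rule measurable_compose[OF pm2 gm])
    have Sm: "{\<omega> \<in> space M. g (A, A *v X \<omega>) \<noteq> X \<omega>} \<in> sets M"
      using gX assms(2) by measurable
    have "emeasure M {\<omega> \<in> space M. g (A, A *v X \<omega>) \<noteq> X \<omega>} = 0"
      using good by (subst (asm) AE_iff_measurable[OF Sm]) auto
    then show "measure M {\<omega> \<in> space M. g (A, A *v X \<omega>) \<noteq> X \<omega>} = 0"
      by (simp add: measure_def)
  qed
  show ?thesis
    by (intro exI[of _ g] conjI gm AE_completion main)
qed


end
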